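(* Let $a<b$, $c<d$. If $f:[a,b]\times[c,d]\to\mathbb{R}$ is continuous and of bounded variation in the sense of Arzelà, then the box dimension of its graph $G(f)$ exists and $$\dim_B(G(f))=\dim_H(G(f))=2.$$
   Context: The graph of $f:[a,b]\times[c,d]\to\mathbb{R}$ is $G(f)=\{(x,y,f(x,y)):(x,y)\in[a,b]\times[c,d]\}\subset\mathbb{R}^3$; $\dim_H$ and $\dim_B$ denote Hausdorff and box-counting dimension. A function $f:[a,b]\times[c,d]\to\mathbb{R}$ is of bounded variation in the sense of Arzelà if there is a constant $K$ such that for every $m\in\mathbb{N}$ and all points $a=x_0\le x_1\le\dots\le x_m=b$, $c=y_0\le y_1\le\dots\le y_m=d$, one has $\sum_{i=0}^{m-1}|f(x_{i+1},y_{i+1})-f(x_i,y_i)|\le K$. *)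

theory Defs
  imports "HOL-Analysis.Analysis"
begin

text \<open>Hausdorff s-dimensional measure via countable delta-covers by bounded sets
  (Falconer's definition, unnormalised).\<close>

definition hausdorff_content :: "real \<Rightarrow> real \<Rightarrow> 'a::metric_space set \<Rightarrow> ennreal" where
  "hausdorff_content s \<delta> F =
     (INF U \<in> {U :: nat \<Rightarrow> 'a set. F \<subseteq> (\<Union>i. U i) \<and> (\<forall>i. bounded (U i) \<and> diameter (U i) \<le> \<delta>)}.
        (\<Sum>i. ennreal (diameter (U i) powr s)))"

definition hausdorff_measure :: "real \<Rightarrow> 'a::metric_space set \<Rightarrow> ennreal" where
  "hausdorff_measure s F = (SUP \<delta> \<in> {0<..}. hausdorff_content s \<delta> F)"

definition hausdorff_dim :: "'a::metric_space set \<Rightarrow> real" where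
  "hausdorff_dim F = Inf {s. 0 \<le> s \<and> hausdorff_measure s F = 0}"

definition covering_number :: "real \<Rightarrow> 'a::metric_space set \<Rightarrow> nat" where
  "covering_number \<delta> F =
     Inf {card C | C. finite C \<and> F \<subseteq> \<Union>C \<and> (\<forall>U\<in>C. bounded U \<and> diameter U \<le> \<delta>)}"

definition lower_box_dim :: "'a::metric_space set \<Rightarrow> ereal" where
  "lower_box_dim F = Liminf (at_right 0) (\<lambda>\<delta>. ereal (ln (real (covering_number \<delta> F)) / - ln \<delta>))"

definition upper_box_dim :: "'a::metric_space set \<Rightarrow> ereal" where
  "upper_box_dim F = Limsup (at_right 0) (\<lambda>\<delta>. ereal (ln (real (covering_number \<delta> F)) / - ln \<delta>))"

definition has_box_dim :: "'a::metric_space set \<Rightarrow> real \<Rightarrow> bool" where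
  "has_box_dim F d \<longleftrightarrow> lower_box_dim F = ereal d \<and> upper_box_dim F = ereal d"

text \<open>Graph in R^3 = real \<times> real \<times> real (product metric is Euclidean).\<close>
definition graph2 :: "real \<Rightarrow> real \<Rightarrow> real \<Rightarrow> real \<Rightarrow> (real \<times> real \<Rightarrow> real) \<Rightarrow> (real \<times> real \<times> real) set" where
  "graph2 a b c d f = {(x, y, f (x, y)) | x y. x \<in> {a..b} \<and> y \<in> {c..d}}"

definition arzela_bv :: "real \<Rightarrow> real \<Rightarrow> real \<Rightarrow> real \<Rightarrow> (real \<times> real \<Rightarrow> real) \<Rightarrow> bool" where
  "arzela_bv a b c d f \<longleftrightarrow> (\<exists>K. \<forall>(m::nat) (x::nat \<Rightarrow> real) (y::nat \<Rightarrow> real).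
      x 0 = a \<and> x m = b \<and> y 0 = c \<and> y m = d \<and> (\<forall>i<m. x i \<le> x (Suc i) \<and> y i \<le> y (Suc i))
      \<longrightarrow> (\<Sum>i<m. \<bar>f (x (Suc i), y (Suc i)) - f (x i, y i)\<bar>) \<le> K)"

end

theory Submission
  imports Defs "HOL-Real_Asymp.Real_Asymp"
begin

lemma emeasure_box2: "emeasure lborel (cbox (x0::real,y0::real) (x1,y1)) = (if x0 \<le> x1 \<and> y0 \<le> y1 then ennreal ((x1-x0)*(y1-y0)) else 0)"
  by (simp add: emeasure_lborel_cbox_eq Basis_prod_def inner_Pair ennreal_mult mult.commute)

lemma area_lemma:
  fixes U :: "nat \<Rightarrow> (real\<times>real\<times>real) set"
  assumes ab: "a \<le> b" and cd: "c \<le> d" and cov: "graph2 a b c d f \<subseteq> (\<Union>i. U i)" and bdd: "\<forall>i. bounded (U i)"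
  shows "ennreal ((b-a)*(d-c)) \<le> (\<Sum>i. ennreal (4 * diameter (U i)^2))"
proof -
  define u where "u i = (SOME u. u \<in> U i)" for i
  define B where "B i = (if U i = {} then {} else
     cbox (fst (u i) - diameter (U i), fst (snd (u i)) - diameter (U i)) (fst (u i) + diameter (U i), fst (snd (u i)) + diameter (U i)))" for i
  have sub: "cbox (a,c) (b,d) \<subseteq> (\<Union>i. B i)"
  proof
    fix p assume "p \<in> cbox (a,c) (b,d)"
    then obtain x y where p: "p = (x,y)" "x \<in> {a..b}" "y \<in> {c..d}"
      by (cases p) (auto simp: cbox_Pair_eq)
    then have "(x,y,f(x,y)) \<in> graph2 a b c d f" unfolding graph2_def by auto
    with cov obtain i where i: "(x,y,f(x,y)) \<in> U i" by auto
    then have ne: "U i \<noteq> {}" by auto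
    then have ui: "u i \<in> U i" unfolding u_def by (simp add: some_in_eq)
    have dd: "dist (x,y,f(x,y)) (u i) \<le> diameter (U i)"
      using diameter_bounded_bound[OF bdd[rule_format] i ui] .
    have d1: "dist x (fst (u i)) \<le> diameter (U i)"
      using dist_fst_le[of "(x,y,f(x,y))" "u i"] dd by simp
    have d2: "dist y (fst (snd (u i))) \<le> diameter (U i)"
      using dist_fst_le[of "(y,f(x,y))" "snd (u i)"] dist_snd_le[of "(x,y,f(x,y))" "u i"] dd by simp
    have "p \<in> B i" using ne d1 d2 unfolding B_def p(1)
      by (auto simp: cbox_Pair_eq dist_real_def abs_le_iff)
    then show "p \<in> (\<Union>i. B i)" by auto
  qed
  have "ennreal ((b-a)*(d-c)) = emeasure lborel (cbox (a,c) (b,d))"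
    using ab cd by (simp add: emeasure_box2)
  also have "\<dots> \<le> emeasure lborel (\<Union>i. B i)"
    using sub by (intro emeasure_mono) (auto simp: B_def)
  also have "\<dots> \<le> (\<Sum>i. emeasure lborel (B i))"
    by (intro emeasure_subadditive_countably) (auto simp: B_def)
  also have "\<dots> \<le> (\<Sum>i. ennreal (4 * diameter (U i)^2))"
  proof (intro suminf_le)
    fix i
    show "emeasure lborel (B i) \<le> ennreal (4 * diameter (U i)^2)"
    proof (cases "U i = {}")
      case True then show ?thesis by (simp add: B_def)
    next
      case False
      have "0 \<le> diameter (U i)" by (simp add: diameter_ge_0 bdd)
      then show ?thesis using False by (simp add: B_def emeasure_box2 power2_eq_square algebra_simps)
    qed
  qed auto
  finally show ?thesis .
qed

lemma finite_seq:
  assumes "finite C"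
  obtains U :: "nat \<Rightarrow> 'a set" where "(\<Union>i. U i) = \<Union>C" "\<forall>i. U i \<in> C \<or> U i = {}"
    "\<And>h::'a set \<Rightarrow> real. h {} = 0 \<Longrightarrow> (\<forall>V. 0 \<le> h V) \<Longrightarrow> (\<Sum>i. ennreal (h (U i))) = ennreal (\<Sum>V\<in>C. h V)"
proof -
  obtain xs where xs: "set xs = C" "distinct xs" using finite_distinct_list[OF assms] by blast
  define U where "U i = (if i < length xs then xs!i else {})" for i
  have 1: "(\<Union>i. U i) = \<Union>C"
    unfolding U_def xs(1)[symmetric] by (auto simp: in_set_conv_nth split: if_splits) (metis nth_mem)
  have 2: "\<forall>i. U i \<in> C \<or> U i = {}" unfolding U_def xs(1)[symmetric] by auto
  have 3: "(\<Sum>i. ennreal (h (U i))) = ennreal (\<Sum>V\<in>C. h V)" if h0: "h {} = 0" and hn: "\<forall>V. 0 \<le> h V" for h :: "'a set \<Rightarrow> real"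
  proof -
    have "(\<Sum>i. ennreal (h (U i))) = (\<Sum>i<length xs. ennreal (h (U i)))"
      by (rule suminf_finite) (auto simp: U_def h0)
    also have "\<dots> = ennreal (\<Sum>i<length xs. h (U i))"
      using hn by (simp add: sum_ennreal)
    also have "(\<Sum>i<length xs. h (U i)) = (\<Sum>i<length xs. h (xs!i))"
      by (auto simp: U_def)
    also have "\<dots> = sum_list (map h xs)"
      by (simp add: sum_list_sum_nth atLeast0LessThan)
    also have "\<dots> = (\<Sum>V\<in>C. h V)"
      using xs(2) unfolding xs(1)[symmetric] by (rule sum.distinct_set_conv_list[symmetric])
    finally show ?thesis .
  qed
  show ?thesis using that[OF 1 2 3] by blast
qed

lemma chain_bound:
  fixes f :: "real \<times> real \<Rightarrow> real" and z :: "nat \<Rightarrow> real \<times> real"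
  assumes ab: "a \<le> b" and cd: "c \<le> d"
    and arz: "\<forall>(m::nat) (x::nat \<Rightarrow> real) (y::nat \<Rightarrow> real).
      x 0 = a \<and> x m = b \<and> y 0 = c \<and> y m = d \<and> (\<forall>i<m. x i \<le> x (Suc i) \<and> y i \<le> y (Suc i))
      \<longrightarrow> (\<Sum>i<m. \<bar>f (x (Suc i), y (Suc i)) - f (x i, y i)\<bar>) \<le> K"
    and zin: "\<forall>k<2*L. fst (z k) \<in> {a..b} \<and> snd (z k) \<in> {c..d}"
    and mono: "\<forall>k. Suc k < 2*L \<longrightarrow> fst (z k) \<le> fst (z (Suc k)) \<and> snd (z k) \<le> snd (z (Suc k))"
  shows "(\<Sum>k<L. \<bar>f (z (2*k+1)) - f (z (2*k))\<bar>) \<le> K"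
proof -
  define w where "w i = (if i = 0 then (a,c) else if i \<le> 2*L then z (i-1) else (b,d))" for i
  define m where "m = 2*L+1"
  have w0: "fst (w 0) = a" "snd (w 0) = c" and wm: "fst (w m) = b" "snd (w m) = d"
    by (auto simp: w_def m_def)
  have wmono: "\<forall>i<m. fst (w i) \<le> fst (w (Suc i)) \<and> snd (w i) \<le> snd (w (Suc i))"
  proof (intro allI impI)
    fix i assume "i < m"
    show "fst (w i) \<le> fst (w (Suc i)) \<and> snd (w i) \<le> snd (w (Suc i))"
    proof (cases "i = 0")
      case True
      then show ?thesis using zin ab cd by (cases "L = 0") (auto simp: w_def)
    next
      case False
      show ?thesis
      proof (cases "Suc i \<le> 2*L")
        case True
        then show ?thesis using False mono[rule_format, of "i-1"] by (auto simp: w_def)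
      next
        case F2: False
        then have "i = 2*L" using \<open>i < m\<close> m_def by auto
        then show ?thesis using False zin[rule_format, of "i-1"] by (auto simp: w_def)
      qed
    qed
  qed
  have "(\<Sum>i<m. \<bar>f (fst (w (Suc i)), snd (w (Suc i))) - f (fst (w i), snd (w i))\<bar>) \<le> K"
    using arz[rule_format, of "\<lambda>i. fst (w i)" m "\<lambda>i. snd (w i)"] w0 wm wmono by blast
  then have S: "(\<Sum>i<m. \<bar>f (w (Suc i)) - f (w i)\<bar>) \<le> K" by simp
  have "(\<Sum>k<L. \<bar>f (z (2*k+1)) - f (z (2*k))\<bar>) = (\<Sum>k<L. \<bar>f (w (Suc (2*k+1))) - f (w (2*k+1))\<bar>)"
    by (intro sum.cong) (auto simp: w_def)
  also have "\<dots> = (\<Sum>i\<in>(\<lambda>k. 2*k+1) ` {..<L}. \<bar>f (w (Suc i)) - f (w i)\<bar>)"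
    by (subst sum.reindex) (auto simp: inj_on_def)
  also have "\<dots> \<le> (\<Sum>i<m. \<bar>f (w (Suc i)) - f (w i)\<bar>)"
    by (intro sum_mono2) (auto simp: m_def)
  finally show ?thesis using S by linarith
qed

lemma grid_facts:
  fixes a b :: real and n :: nat
  assumes "a \<le> b" "n \<ge> 1"
  shows "i \<le> i' \<Longrightarrow> a + real i * (b-a)/n \<le> a + real i' * (b-a)/n"
    and "a \<le> a + real i * (b-a)/n"
    and "i \<le> n \<Longrightarrow> a + real i * (b-a)/n \<le> b"
proof -
  show "i \<le> i' \<Longrightarrow> a + real i * (b-a)/n \<le> a + real i' * (b-a)/n"
    using assms by (intro add_left_mono divide_right_mono mult_right_mono) auto
  show "a \<le> a + real i * (b-a)/n" using assms by auto
  assume "i \<le> n"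
  then have "real i * (b-a) \<le> real n * (b-a)" using assms by (intro mult_right_mono) auto
  then have "real i * (b-a)/n \<le> b - a" using assms by (simp add: divide_le_eq mult.commute)
  then show "a + real i * (b-a)/n \<le> b" by simp
qed

lemma osc_sum:
  fixes f :: "real \<times> real \<Rightarrow> real" and p :: "nat \<Rightarrow> nat \<Rightarrow> real \<times> real"
  assumes ab: "a \<le> b" and cd: "c \<le> d" and n1: "n \<ge> 1"
    and arz: "\<forall>(m::nat) (x::nat \<Rightarrow> real) (y::nat \<Rightarrow> real).
      x 0 = a \<and> x m = b \<and> y 0 = c \<and> y m = d \<and> (\<forall>i<m. x i \<le> x (Suc i) \<and> y i \<le> y (Suc i))
      \<longrightarrow> (\<Sum>i<m. \<bar>f (x (Suc i), y (Suc i)) - f (x i, y i)\<bar>) \<le> K"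
    and X: "X = (\<lambda>i. a + real i * (b-a)/n)" and Y: "Y = (\<lambda>j. c + real j * (d-c)/n)"
    and p: "\<forall>i<n. \<forall>j<n. p i j \<in> {X i..X (Suc i)} \<times> {Y j..Y (Suc j)}"
  shows "(\<Sum>i<n. \<Sum>j<n. \<bar>f (p i j) - f (X i, Y j)\<bar>) \<le> real (2*n-1) * K"
proof -
  define g where "g i j = \<bar>f (p i j) - f (X i, Y j)\<bar>" for i j
  define jj where "jj e i = int i + int e - int (n-1)" for e i :: nat
  define h where "h e i = (if 0 \<le> jj e i \<and> jj e i < int n then g i (nat (jj e i)) else 0)" for e i
  have Xm: "\<And>i i'. i \<le> i' \<Longrightarrow> X i \<le> X i'" "\<And>i. a \<le> X i" "\<And>i. i \<le> n \<Longrightarrow> X i \<le> b"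
    using grid_facts[OF ab n1] unfolding X by auto
  have Ym: "\<And>i i'. i \<le> i' \<Longrightarrow> Y i \<le> Y i'" "\<And>i. c \<le> Y i" "\<And>i. i \<le> n \<Longrightarrow> Y i \<le> d"
    using grid_facts[OF cd n1] unfolding Y by auto
  have step1: "(\<Sum>i<n. \<Sum>j<n. g i j) \<le> (\<Sum>i<n. \<Sum>e<2*n-1. h e i)"
  proof (intro sum_mono)
    fix i assume i: "i \<in> {..<n}"
    have "(\<Sum>j<n. g i j) = (\<Sum>j<n. h (j + (n-1) - i) i)"
      using i by (intro sum.cong) (auto simp: h_def jj_def)
    also have "\<dots> = (\<Sum>e\<in>(\<lambda>j. j + (n-1) - i) ` {..<n}. h e i)"
      using i by (subst sum.reindex) (auto simp: inj_on_def)
    also have "\<dots> \<le> (\<Sum>e<2*n-1. h e i)"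
      using i by (intro sum_mono2) (auto simp: h_def g_def)
    finally show "(\<Sum>j<n. g i j) \<le> (\<Sum>e<2*n-1. h e i)" .
  qed
  have step2: "(\<Sum>i<n. h e i) \<le> K" for e
  proof -
    define z where "z k = (let i = k div 2; j = jj e i in
       if j < 0 then (a,c) else if j \<ge> int n then (b,d)
       else if even k then (X i, Y (nat j)) else p i (nat j))" for k
    have zin: "\<forall>k<2*n. fst (z k) \<in> {a..b} \<and> snd (z k) \<in> {c..d}"
    proof (intro allI impI)
      fix k assume k: "k < 2*n"
      then have kn: "k div 2 < n" by auto
      show "fst (z k) \<in> {a..b} \<and> snd (z k) \<in> {c..d}"
      proof (cases "jj e (k div 2) < 0 \<or> jj e (k div 2) \<ge> int n")
        case True then show ?thesis using ab cd by (auto simp: z_def Let_def)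
      next
        case False
        then have jn: "nat (jj e (k div 2)) < n" by auto
        define i where "i = k div 2"
        define j where "j = nat (jj e (k div 2))"
        have zz: "z k = (X i, Y j) \<or> z k = p i j" using False by (auto simp: z_def Let_def i_def j_def)
        have "Suc j \<le> n" "Suc i \<le> n" using jn kn by (auto simp: i_def j_def)
        then have "X (Suc i) \<le> b" "Y (Suc j) \<le> d" "X i \<le> b" "Y j \<le> d" using Xm Ym by auto
        moreover have "p i j \<in> {X i..X (Suc i)} \<times> {Y j..Y (Suc j)}" using p kn jn by (auto simp: i_def j_def)
        moreover have "a \<le> X i" "c \<le> Y j" using Xm Ym by auto
        ultimately show ?thesis using zz
          by (auto simp: mem_Times_iff)
      qed
    qed
    have zmono: "\<forall>k. Suc k < 2*n \<longrightarrow> fst (z k) \<le> fst (z (Suc k)) \<and> snd (z k) \<le> snd (z (Suc k))"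
    proof (intro allI impI)
      fix k assume k: "Suc k < 2*n"
      have zk: "fst (z k) \<in> {a..b} \<and> snd (z k) \<in> {c..d}" "fst (z (Suc k)) \<in> {a..b} \<and> snd (z (Suc k)) \<in> {c..d}"
        using zin k by auto
      show "fst (z k) \<le> fst (z (Suc k)) \<and> snd (z k) \<le> snd (z (Suc k))"
      proof (cases "even k")
        case True
        then have dk: "Suc k div 2 = k div 2" by presburger
        have kn: "k div 2 < n" using k by auto
        show ?thesis
        proof (cases "jj e (k div 2) < 0 \<or> jj e (k div 2) \<ge> int n")
          case True then show ?thesis using dk by (auto simp: z_def Let_def)
        next
          case False
          then have jn: "nat (jj e (k div 2)) < n" by auto
          show ?thesis using False True dk p[rule_format, OF kn jn]
            by (auto simp: z_def Let_def)
        qed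
      next
        case odd: False
        define i where "i = k div 2"
        have dk: "Suc k div 2 = Suc i" using odd unfolding i_def by presburger
        have iS: "Suc i < n" using k odd unfolding i_def by presburger
        have jS: "jj e (Suc i) = jj e i + 1" by (simp add: jj_def)
        have evS: "even (Suc k)" using odd by simp
        show ?thesis
        proof (cases "jj e i < 0")
          case True
          then have "z k = (a,c)" by (simp add: z_def Let_def i_def)
          then show ?thesis using zk by auto
        next
          case F1: False
          show ?thesis
          proof (cases "jj e i \<ge> int n")
            case True
            then have "z k = (b,d)" "z (Suc k) = (b,d)" using F1 jS dk
              by (auto simp: z_def Let_def i_def)
            then show ?thesis by auto
          next
            case F2: False
            then have jn: "nat (jj e i) < n" using F1 by auto
            have in_: "i < n" using iS by auto
            have zk': "z k = p i (nat (jj e i))" using F1 F2 odd by (simp add: z_def Let_def i_def)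
            show ?thesis
            proof (cases "jj e (Suc i) \<ge> int n")
              case True
              then have "z (Suc k) = (b,d)" using F1 jS dk by (auto simp: z_def Let_def)
              then show ?thesis using zk by auto
            next
              case F3: False
              have zS: "z (Suc k) = (X (Suc i), Y (Suc (nat (jj e i))))"
                using F1 F3 jS dk evS by (simp add: z_def Let_def nat_add_distrib)
              show ?thesis using p[rule_format, OF in_ jn] zk' zS
                by (auto simp: mem_Times_iff)
            qed
          qed
        qed
      qed
    qed
    have "(\<Sum>k<n. \<bar>f (z (2*k+1)) - f (z (2*k))\<bar>) \<le> K"
      by (rule chain_bound[OF ab cd arz zin zmono])
    moreover have "(\<Sum>k<n. \<bar>f (z (2*k+1)) - f (z (2*k))\<bar>) = (\<Sum>i<n. h e i)"
    proof (intro sum.cong refl)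
      fix k assume "k \<in> {..<n}"
      have d1: "(2*k+1) div 2 = k" "(2*k) div 2 = k" by auto
      show "\<bar>f (z (2*k+1)) - f (z (2*k))\<bar> = h e k"
        by (auto simp: z_def Let_def d1 h_def g_def)
    qed
    ultimately show ?thesis by simp
  qed
  have "(\<Sum>i<n. \<Sum>j<n. g i j) \<le> (\<Sum>i<n. \<Sum>e<2*n-1. h e i)" by (rule step1)
  also have "\<dots> = (\<Sum>e<2*n-1. \<Sum>i<n. h e i)" by (rule sum.swap)
  also have "\<dots> \<le> (\<Sum>e<2*n-1. K)" by (intro sum_mono step2)
  also have "\<dots> = real (2*n-1) * K" by simp
  finally show ?thesis unfolding g_def .
qed

lemma grid_index:
  fixes a b x :: real and n :: nat
  assumes ab: "a < b" and n1: "n \<ge> 1" and x: "x \<in> {a..b}"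
  shows "\<exists>i<n. a + real i * (b-a)/n \<le> x \<and> x \<le> a + real (Suc i) * (b-a)/n"
proof (cases "x = b")
  case True
  have "a + real (n-1) * (b-a)/n \<le> b" using grid_facts(3)[of a b n "n-1"] ab n1 by auto
  moreover have "a + real (Suc (n-1)) * (b-a)/n = b" using n1 by auto
  ultimately show ?thesis using True n1 by (intro exI[of _ "n-1"]) auto
next
  case False
  define t where "t = (x-a) * n / (b-a)"
  have t0: "0 \<le> t" using x ab unfolding t_def by auto
  have tn: "t < n" using x False ab n1 unfolding t_def by (auto simp: divide_less_eq)
  define i where "i = nat \<lfloor>t\<rfloor>"
  have ri: "real i = of_int \<lfloor>t\<rfloor>" using t0 unfolding i_def by simp
  have i1: "real i \<le> t" "t < real i + 1" using ri by linarith+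
  have "i < n" using i1 tn by linarith
  have xe: "x = a + t * (b-a)/n" using ab n1 unfolding t_def by auto
  have "a + real i * (b-a)/n \<le> x" unfolding xe using i1 ab n1
    by (intro add_left_mono divide_right_mono mult_right_mono) auto
  moreover have "x \<le> a + real (Suc i) * (b-a)/n" unfolding xe using i1 ab n1
    by (intro add_left_mono divide_right_mono mult_right_mono) auto
  ultimately show ?thesis using \<open>i < n\<close> by blast
qed

lemma diam_box3:
  fixes A B Z :: "real set" and h :: real
  assumes "\<And>u v. u \<in> A \<Longrightarrow> v \<in> A \<Longrightarrow> \<bar>u - v\<bar> \<le> h"
    and "\<And>u v. u \<in> B \<Longrightarrow> v \<in> B \<Longrightarrow> \<bar>u - v\<bar> \<le> h"
    and "\<And>u v. u \<in> Z \<Longrightarrow> v \<in> Z \<Longrightarrow> \<bar>u - v\<bar> \<le> h"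
    and h0: "0 \<le> h"
  shows "diameter (A \<times> B \<times> Z) \<le> 2*h"
proof (rule diameter_le)
  show "A \<times> B \<times> Z \<noteq> {} \<or> 0 \<le> 2*h" using h0 by simp
  fix p q assume p: "p \<in> A \<times> B \<times> Z" and q: "q \<in> A \<times> B \<times> Z"
  obtain p1 p2 p3 where pp: "p = (p1,p2,p3)" by (cases p) auto
  obtain q1 q2 q3 where qq: "q = (q1,q2,q3)" by (cases q) auto
  have "p1 \<in> A" "q1 \<in> A" "p2 \<in> B" "q2 \<in> B" "p3 \<in> Z" "q3 \<in> Z" using p q pp qq by auto
  then have "\<bar>p1 - q1\<bar> \<le> h" "\<bar>p2 - q2\<bar> \<le> h" "\<bar>p3 - q3\<bar> \<le> h"
    using assms(1-3) by auto
  then have s: "(p1-q1)^2 \<le> h^2" "(p2-q2)^2 \<le> h^2" "(p3-q3)^2 \<le> h^2"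
    using h0 by (metis abs_le_square_iff abs_of_nonneg)+
  have "norm (p - q) = sqrt ((p1-q1)^2 + ((p2-q2)^2 + (p3-q3)^2))"
    by (simp add: pp qq norm_Pair)
  also have "\<dots> \<le> sqrt ((2*h)^2)" using s zero_le_power2[of h] by (intro real_sqrt_le_mono) (simp add: power_mult_distrib; smt (verit) zero_le_power2)
  also have "\<dots> = 2*h" using h0 by (simp only: real_sqrt_abs)
  finally show "norm (p - q) \<le> 2*h" .
qed

lemma cover_bound:
  fixes f :: "real \<times> real \<Rightarrow> real"
  assumes ab: "a < b" and cd: "c < d" and cont: "continuous_on ({a..b} \<times> {c..d}) f"
    and arz: "\<forall>(m::nat) (x::nat \<Rightarrow> real) (y::nat \<Rightarrow> real).
      x 0 = a \<and> x m = b \<and> y 0 = c \<and> y m = d \<and> (\<forall>i<m. x i \<le> x (Suc i) \<and> y i \<le> y (Suc i))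
      \<longrightarrow> (\<Sum>i<m. \<bar>f (x (Suc i), y (Suc i)) - f (x i, y i)\<bar>) \<le> K"
    and K0: "0 \<le> K" and n1: "n \<ge> 1"
  shows "\<exists>C. finite C \<and> graph2 a b c d f \<subseteq> \<Union>C \<and>
     (\<forall>U\<in>C. bounded U \<and> diameter U \<le> 2 * (max (b-a) (d-c) / n)) \<and>
     real (card C) \<le> real n ^ 2 * (2 + 4 * K / max (b-a) (d-c))"
proof -
  define L0 where "L0 = max (b-a) (d-c)"
  define hh where "hh = L0 / n"
  have L0p: "L0 > 0" using ab cd unfolding L0_def by auto
  have hhp: "hh > 0" using L0p n1 unfolding hh_def by auto
  define X where "X = (\<lambda>i. a + real i * (b-a)/n)"
  define Y where "Y = (\<lambda>j. c + real j * (d-c)/n)"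
  define Q where "Q i j = {X i..X (Suc i)} \<times> {Y j..Y (Suc j)}" for i j
  have Xm: "\<And>i i'. i \<le> i' \<Longrightarrow> X i \<le> X i'" "\<And>i. a \<le> X i" "\<And>i. i \<le> n \<Longrightarrow> X i \<le> b"
    using grid_facts[of a b n] ab n1 unfolding X_def by auto
  have Ym: "\<And>i i'. i \<le> i' \<Longrightarrow> Y i \<le> Y i'" "\<And>i. c \<le> Y i" "\<And>i. i \<le> n \<Longrightarrow> Y i \<le> d"
    using grid_facts[of c d n] cd n1 unfolding Y_def by auto
  have Xd: "X (Suc i) - X i \<le> hh" for i
  proof -
    have "X (Suc i) - X i = (b-a)/n" unfolding X_def using n1 by (simp add: field_simps)
    also have "\<dots> \<le> hh" unfolding hh_def L0_def using n1 by (intro divide_right_mono) auto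
    finally show ?thesis .
  qed
  have Yd: "Y (Suc i) - Y i \<le> hh" for i
  proof -
    have "Y (Suc i) - Y i = (d-c)/n" unfolding Y_def using n1 by (simp add: field_simps)
    also have "\<dots> \<le> hh" unfolding hh_def L0_def using n1 by (intro divide_right_mono) auto
    finally show ?thesis .
  qed
  have Qsub: "Q i j \<subseteq> {a..b} \<times> {c..d}" if "i < n" "j < n" for i j
  proof -
    have "X (Suc i) \<le> b" "Y (Suc j) \<le> d" "a \<le> X i" "c \<le> Y j" using that Xm Ym by auto
    then show ?thesis unfolding Q_def by auto
  qed
  have Qne: "Q i j \<noteq> {}" for i j unfolding Q_def using Xm(1)[of i "Suc i"] Ym(1)[of j "Suc j"] by auto
  have Qc: "compact (Q i j)" for i j unfolding Q_def by (intro compact_Times compact_Icc)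
  have Qcont: "continuous_on (Q i j) f" if "i < n" "j < n" for i j
    using continuous_on_subset[OF cont Qsub[OF that]] .
  define pM where "pM i j = (SOME p. p \<in> Q i j \<and> (\<forall>q\<in>Q i j. f q \<le> f p))" for i j
  define pm where "pm i j = (SOME p. p \<in> Q i j \<and> (\<forall>q\<in>Q i j. f p \<le> f q))" for i j
  have pM: "pM i j \<in> Q i j \<and> (\<forall>q\<in>Q i j. f q \<le> f (pM i j))" if ij: "i < n" "j < n" for i j
  proof -
    obtain p where "p \<in> Q i j" "\<forall>q\<in>Q i j. f q \<le> f p"
      using continuous_attains_sup[OF Qc Qne Qcont[OF ij]] by blast
    then show ?thesis unfolding pM_def by (rule someI2[where Q = "\<lambda>p. p \<in> Q i j \<and> (\<forall>q\<in>Q i j. f q \<le> f p)", OF conjI]) auto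
  qed
  have pm: "pm i j \<in> Q i j \<and> (\<forall>q\<in>Q i j. f (pm i j) \<le> f q)" if ij: "i < n" "j < n" for i j
  proof -
    obtain p where "p \<in> Q i j" "\<forall>q\<in>Q i j. f p \<le> f q"
      using continuous_attains_inf[OF Qc Qne Qcont[OF ij]] by blast
    then show ?thesis unfolding pm_def by (rule someI2[where Q = "\<lambda>p. p \<in> Q i j \<and> (\<forall>q\<in>Q i j. f p \<le> f q)", OF conjI]) auto
  qed
  define M where "M i j = f (pM i j)" for i j
  define m where "m i j = f (pm i j)" for i j
  define N where "N i j = nat \<lceil>(M i j - m i j) / hh\<rceil>" for i j
  define Bx where "Bx i j k = {X i..X (Suc i)} \<times> {Y j..Y (Suc j)} \<times> {m i j + real k * hh .. m i j + real (Suc k) * hh}" for i j k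
  define C where "C = (\<Union>i<n. \<Union>j<n. Bx i j ` {..N i j})"
  have finC: "finite C" unfolding C_def by auto
  have cov: "graph2 a b c d f \<subseteq> \<Union>C"
  proof
    fix w assume "w \<in> graph2 a b c d f"
    then obtain x y where w: "w = (x, y, f (x,y))" "x \<in> {a..b}" "y \<in> {c..d}"
      unfolding graph2_def by auto
    obtain i where i: "i < n" "X i \<le> x" "x \<le> X (Suc i)"
      using grid_index[OF ab n1 w(2)] unfolding X_def by auto
    obtain j where j: "j < n" "Y j \<le> y" "y \<le> Y (Suc j)"
      using grid_index[OF cd n1 w(3)] unfolding Y_def by auto
    have xyQ: "(x,y) \<in> Q i j" using i j unfolding Q_def by auto
    have fm: "m i j \<le> f (x,y)" "f (x,y) \<le> M i j"
      using pm[OF i(1) j(1)] pM[OF i(1) j(1)] xyQ unfolding m_def M_def by auto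
    define t where "t = (f (x,y) - m i j) / hh"
    define k where "k = nat \<lfloor>t\<rfloor>"
    have t0: "0 \<le> t" using fm hhp unfolding t_def by auto
    have rk: "real k = of_int \<lfloor>t\<rfloor>" using t0 unfolding k_def by simp
    have k1: "real k \<le> t" "t < real k + 1" using rk by linarith+
    have "t \<le> (M i j - m i j) / hh" unfolding t_def using fm hhp by (intro divide_right_mono) auto
    then have "\<lfloor>t\<rfloor> \<le> \<lceil>(M i j - m i j) / hh\<rceil>" by (meson ceiling_correct floor_le_ceiling floor_mono order_trans)
    then have kN: "k \<le> N i j" unfolding k_def N_def by (simp add: nat_mono)
    have ft: "f (x,y) = m i j + t * hh" unfolding t_def using hhp by simp
    have "m i j + real k * hh \<le> f (x,y)" unfolding ft using k1 hhp by (intro add_left_mono mult_right_mono) auto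
    moreover have "f (x,y) \<le> m i j + real (Suc k) * hh" unfolding ft using k1 hhp by (intro add_left_mono mult_right_mono) auto
    ultimately have "w \<in> Bx i j k" using xyQ w unfolding Bx_def Q_def by auto
    then show "w \<in> \<Union>C" using i(1) j(1) kN unfolding C_def by blast
  qed
  have diamC: "\<forall>U\<in>C. bounded U \<and> diameter U \<le> 2 * hh"
  proof
    fix U assume "U \<in> C"
    then obtain i j k where U: "U = Bx i j k" unfolding C_def by auto
    have "bounded U" unfolding U Bx_def
      by (intro compact_imp_bounded compact_Times compact_Icc)
    moreover have "diameter U \<le> 2 * hh" unfolding U Bx_def
    proof (rule diam_box3)
      show "\<bar>u - v\<bar> \<le> hh" if "u \<in> {X i..X (Suc i)}" "v \<in> {X i..X (Suc i)}" for u v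
        using that Xd[of i] by auto
      show "\<bar>u - v\<bar> \<le> hh" if "u \<in> {Y j..Y (Suc j)}" "v \<in> {Y j..Y (Suc j)}" for u v
        using that Yd[of j] by auto
      show "\<bar>u - v\<bar> \<le> hh" if "u \<in> {m i j + real k * hh .. m i j + real (Suc k) * hh}"
          "v \<in> {m i j + real k * hh .. m i j + real (Suc k) * hh}" for u v
        using that by (auto simp: algebra_simps)
      show "0 \<le> hh" using hhp by simp
    qed
    ultimately show "bounded U \<and> diameter U \<le> 2 * hh" by simp
  qed
  have "card C \<le> (\<Sum>i<n. card (\<Union>j<n. Bx i j ` {..N i j}))"
    unfolding C_def by (rule card_UN_le) simp
  also have "\<dots> \<le> (\<Sum>i<n. \<Sum>j<n. card (Bx i j ` {..N i j}))"
    by (intro sum_mono card_UN_le) simp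
  also have "\<dots> \<le> (\<Sum>i<n. \<Sum>j<n. N i j + 1)"
    by (intro sum_mono) (metis card_atMost card_image_le finite_atMost Suc_eq_plus1)
  finally have "real (card C) \<le> real (\<Sum>i<n. \<Sum>j<n. N i j + 1)"
    by (rule of_nat_mono)
  then have cC: "real (card C) \<le> (\<Sum>i<n. \<Sum>j<n. real (N i j) + 1)"
    by (simp add: add.commute)
  have Mm: "m i j \<le> M i j" if "i < n" "j < n" for i j
    using pm[OF that] pM[OF that] unfolding m_def M_def by blast
  have Nb: "real (N i j) \<le> (M i j - m i j) / hh + 1" if "i < n" "j < n" for i j
  proof -
    have "0 \<le> (M i j - m i j) / hh" using Mm[OF that] hhp by auto
    then show ?thesis unfolding N_def by linarith
  qed
  have oM: "(\<Sum>i<n. \<Sum>j<n. \<bar>f (pM i j) - f (X i, Y j)\<bar>) \<le> real (2*n-1) * K"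
    using osc_sum[OF less_imp_le[OF ab] less_imp_le[OF cd] n1 arz X_def Y_def] pM unfolding Q_def by blast
  have om: "(\<Sum>i<n. \<Sum>j<n. \<bar>f (pm i j) - f (X i, Y j)\<bar>) \<le> real (2*n-1) * K"
    using osc_sum[OF less_imp_le[OF ab] less_imp_le[OF cd] n1 arz X_def Y_def] pm unfolding Q_def by blast
  have "(\<Sum>i<n. \<Sum>j<n. M i j - m i j) \<le> (\<Sum>i<n. \<Sum>j<n. \<bar>f (pM i j) - f (X i, Y j)\<bar> + \<bar>f (pm i j) - f (X i, Y j)\<bar>)"
    unfolding M_def m_def by (intro sum_mono) linarith
  also have "\<dots> \<le> 2 * (real (2*n-1) * K)" using oM om by (simp add: sum.distrib)
  also have "\<dots> \<le> 4 * real n * K"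
  proof -
    have "real (2*n-1) \<le> 2 * real n" using n1 by auto
    then have "2 * (real (2*n-1) * K) \<le> 2 * ((2 * real n) * K)"
      using K0 by (intro mult_left_mono mult_right_mono) auto
    then show ?thesis by simp
  qed
  finally have sMm: "(\<Sum>i<n. \<Sum>j<n. M i j - m i j) \<le> 4 * real n * K" .
  have "real (card C) \<le> (\<Sum>i<n. \<Sum>j<n. (M i j - m i j) / hh + 2)"
  proof -
    have "(\<Sum>i<n. \<Sum>j<n. real (N i j) + 1) \<le> (\<Sum>i<n. \<Sum>j<n. (M i j - m i j) / hh + 2)"
    proof (intro sum_mono)
      fix i j assume "i \<in> {..<n}" "j \<in> {..<n}"
      then show "real (N i j) + 1 \<le> (M i j - m i j) / hh + 2" using Nb[of i j] by simp
    qed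
    then show ?thesis using cC by linarith
  qed
  also have "\<dots> = (\<Sum>i<n. \<Sum>j<n. M i j - m i j) / hh + 2 * real n ^ 2"
    by (simp add: sum.distrib sum_divide_distrib power2_eq_square)
  also have "\<dots> \<le> 4 * real n * K / hh + 2 * real n ^ 2"
    using sMm hhp by (intro add_right_mono divide_right_mono) auto
  also have "\<dots> = real n ^ 2 * (2 + 4 * K / L0)"
    unfolding hh_def using n1 L0p by (simp add: field_simps power2_eq_square)
  finally have "real (card C) \<le> real n ^ 2 * (2 + 4 * K / L0)" .
  then show ?thesis using finC cov diamC unfolding hh_def L0_def by blast
qed

lemma lower_card:
  fixes f :: "real \<times> real \<Rightarrow> real"
  assumes ab: "a \<le> b" and cd: "c \<le> d" and fin: "finite C" and cov: "graph2 a b c d f \<subseteq> \<Union>C"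
    and dia: "\<forall>U\<in>C. bounded U \<and> diameter U \<le> \<delta>"
  shows "(b-a)*(d-c) \<le> 4 * \<delta>^2 * real (card C)"
proof -
  obtain U where U: "(\<Union>i. U i) = \<Union>C" "\<forall>i. U i \<in> C \<or> U i = {}"
    "\<And>h::_ set \<Rightarrow> real. h {} = 0 \<Longrightarrow> (\<forall>V. 0 \<le> h V) \<Longrightarrow> (\<Sum>i. ennreal (h (U i))) = ennreal (\<Sum>V\<in>C. h V)"
    using finite_seq[OF fin] by blast
  have bU: "\<forall>i. bounded (U i)" using U(2) dia by (metis bounded_empty)
  have "ennreal ((b-a)*(d-c)) \<le> (\<Sum>i. ennreal (4 * diameter (U i)^2))"
    using area_lemma[OF ab cd _ bU] cov U(1) by blast
  also have "\<dots> = ennreal (\<Sum>V\<in>C. 4 * diameter V^2)"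
    by (rule U(3)) auto
  finally have "(b-a)*(d-c) \<le> (\<Sum>V\<in>C. 4 * diameter V^2)"
    by (subst (asm) ennreal_le_iff) (auto intro: sum_nonneg)
  also have "\<dots> \<le> (\<Sum>V\<in>C. 4 * \<delta>^2)"
  proof (intro sum_mono)
    fix V assume "V \<in> C"
    then have "0 \<le> diameter V" "diameter V \<le> \<delta>" using dia by (auto simp: diameter_ge_0)
    then show "4 * diameter V^2 \<le> 4 * \<delta>^2" by (simp add: power_mono)
  qed
  also have "\<dots> = 4 * \<delta>^2 * real (card C)" by simp
  finally show ?thesis .
qed


theorem mainTheorem4:
  fixes a b c d :: real and f :: "real \<times> real \<Rightarrow> real"
  assumes "a < b" and "c < d"
    and "continuous_on ({a..b} \<times> {c..d}) f"
    and "arzela_bv a b c d f"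
  shows "has_box_dim (graph2 a b c d f) 2 \<and> hausdorff_dim (graph2 a b c d f) = 2"
proof -
  note ab = assms(1) and cd = assms(2) and cont = assms(3)
  obtain K0 where arz0: "\<forall>(m::nat) (x::nat \<Rightarrow> real) (y::nat \<Rightarrow> real).
      x 0 = a \<and> x m = b \<and> y 0 = c \<and> y m = d \<and> (\<forall>i<m. x i \<le> x (Suc i) \<and> y i \<le> y (Suc i))
      \<longrightarrow> (\<Sum>i<m. \<bar>f (x (Suc i), y (Suc i)) - f (x i, y i)\<bar>) \<le> K0"
    using assms(4) unfolding arzela_bv_def by blast
  define K where "K = max K0 0"
  have K0: "0 \<le> K" unfolding K_def by simp
  have arz: "\<forall>(m::nat) (x::nat \<Rightarrow> real) (y::nat \<Rightarrow> real).
      x 0 = a \<and> x m = b \<and> y 0 = c \<and> y m = d \<and> (\<forall>i<m. x i \<le> x (Suc i) \<and> y i \<le> y (Suc i))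
      \<longrightarrow> (\<Sum>i<m. \<bar>f (x (Suc i), y (Suc i)) - f (x i, y i)\<bar>) \<le> K"
    using arz0 unfolding K_def by (simp add: le_max_iff_disj)
  define G where "G = graph2 a b c d f"
  define A where "A = (b-a)*(d-c)"
  define L0 where "L0 = max (b-a) (d-c)"
  define Cst where "Cst = 2 + 4 * K / L0"
  define Bc where "Bc = 9 * L0^2 * Cst"
  have Ap: "A > 0" unfolding A_def using ab cd by simp
  have L0p: "L0 > 0" unfolding L0_def using ab cd by simp
  have Cp: "Cst > 0" proof -
    have "0 \<le> 4 * K / L0" using K0 L0p by simp
    then show ?thesis unfolding Cst_def by linarith
  qed
  have Bp: "Bc > 0" unfolding Bc_def using Cp L0p by simp
  have upper: "\<exists>C. finite C \<and> G \<subseteq> \<Union>C \<and> (\<forall>U\<in>C. bounded U \<and> diameter U \<le> \<delta>) \<and> real (card C) \<le> Bc / \<delta>^2"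
    if dp: "0 < \<delta>" and dL: "\<delta> \<le> L0" for \<delta>
  proof -
    define n where "n = nat \<lceil>2*L0/\<delta>\<rceil>"
    have q: "2 \<le> 2*L0/\<delta>" using dp dL by (simp add: le_divide_eq)
    have nr: "real n = of_int \<lceil>2*L0/\<delta>\<rceil>" unfolding n_def using q by simp
    have n1: "2*L0/\<delta> \<le> real n" "real n \<le> 2*L0/\<delta> + 1" using nr by linarith+
    have "n \<ge> 1" using n1 q by linarith
    obtain C where C: "finite C" "G \<subseteq> \<Union>C" "\<forall>U\<in>C. bounded U \<and> diameter U \<le> 2 * (L0 / n)"
       "real (card C) \<le> real n ^ 2 * Cst"
      using cover_bound[OF ab cd cont arz K0 \<open>n \<ge> 1\<close>] unfolding G_def L0_def Cst_def by blast
    have npos: "real n > 0" using \<open>n \<ge> 1\<close> by simp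
    have "2 * (L0 / n) \<le> \<delta>" using n1(1) dp npos L0p by (simp add: field_simps)
    then have d: "\<forall>U\<in>C. bounded U \<and> diameter U \<le> \<delta>" using C(3) by force
    have "real n \<le> 3*L0/\<delta>" using n1(2) dp dL by (simp add: field_simps)
    then have "real n ^ 2 \<le> (3*L0/\<delta>)^2" using npos by (intro power_mono) auto
    then have "real n ^ 2 * Cst \<le> (3*L0/\<delta>)^2 * Cst" using Cp by (intro mult_right_mono) auto
    also have "\<dots> = Bc / \<delta>^2" unfolding Bc_def by (simp add: power_divide power_mult_distrib)
    finally show ?thesis using C d by (intro exI[of _ C]) auto
  qed
  define S where "S \<delta> = {card C | C. finite C \<and> G \<subseteq> \<Union>C \<and> (\<forall>U\<in>C. bounded U \<and> diameter U \<le> \<delta>)}" for \<delta>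
  have Nprops: "A \<le> 4 * \<delta>^2 * real (covering_number \<delta> G) \<and> real (covering_number \<delta> G) \<le> Bc / \<delta>^2"
    if dp: "0 < \<delta>" and dL: "\<delta> \<le> L0" for \<delta>
  proof -
    obtain C where C: "finite C" "G \<subseteq> \<Union>C" "\<forall>U\<in>C. bounded U \<and> diameter U \<le> \<delta>" "real (card C) \<le> Bc / \<delta>^2"
      using upper[OF dp dL] by blast
    have cn: "covering_number \<delta> G = Inf (S \<delta>)" unfolding covering_number_def S_def by simp
    have inS: "card C \<in> S \<delta>" unfolding S_def using C by blast
    then have "Inf (S \<delta>) \<in> S \<delta>" by (intro Inf_nat_def1) auto
    then obtain C' where C': "finite C'" "G \<subseteq> \<Union>C'" "\<forall>U\<in>C'. bounded U \<and> diameter U \<le> \<delta>" "Inf (S \<delta>) = card C'"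
      unfolding S_def by blast
    have "Inf (S \<delta>) \<le> card C" using inS by (intro cInf_lower) auto
    then have "real (covering_number \<delta> G) \<le> Bc / \<delta>^2" using C(4) cn by simp
    moreover have "A \<le> 4 * \<delta>^2 * real (covering_number \<delta> G)"
      using lower_card[of a b c d C' f \<delta>] ab cd C' cn unfolding A_def G_def by simp
    ultimately show ?thesis by simp
  qed
  define g where "g \<delta> = ln (real (covering_number \<delta> G)) / - ln \<delta>" for \<delta>
  have ev: "\<forall>\<^sub>F \<delta> in at_right 0. \<delta> \<in> {0<..<min L0 1}"
    using L0p by (intro eventually_at_right_real) simp
  have lowg: "\<forall>\<^sub>F \<delta> in at_right 0. (ln (A/4) - 2 * ln \<delta>) / - ln \<delta> \<le> g \<delta>"
    and upg: "\<forall>\<^sub>F \<delta> in at_right 0. g \<delta> \<le> (ln Bc - 2 * ln \<delta>) / - ln \<delta>"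
  proof -
    have both: "(ln (A/4) - 2 * ln \<delta>) / - ln \<delta> \<le> g \<delta> \<and> g \<delta> \<le> (ln Bc - 2 * ln \<delta>) / - ln \<delta>"
      if d: "\<delta> \<in> {0<..<min L0 1}" for \<delta>
    proof -
      have dp: "0 < \<delta>" and dL: "\<delta> \<le> L0" and d1: "\<delta> < 1" using d by auto
      have lnp: "0 < - ln \<delta>" using dp d1 by simp
      have N: "A \<le> 4 * \<delta>^2 * real (covering_number \<delta> G)" "real (covering_number \<delta> G) \<le> Bc / \<delta>^2"
        using Nprops[OF dp dL] by auto
      have d2: "0 < \<delta>^2" using dp by simp
      have Nl: "A/4/\<delta>^2 \<le> real (covering_number \<delta> G)" using N(1) d2 by (simp add: field_simps)
      have Al: "0 < A/4/\<delta>^2" using Ap d2 by simp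
      have e1: "ln (A/4/\<delta>^2) = ln (A/4) - 2 * ln \<delta>"
        using Ap d2 dp by (simp add: ln_div ln_mult ln_realpow)
      have e2: "ln (Bc/\<delta>^2) = ln Bc - 2 * ln \<delta>"
        using Bp d2 dp by (simp add: ln_div ln_realpow)
      have "ln (A/4) - 2 * ln \<delta> \<le> ln (real (covering_number \<delta> G))"
        using Nl Al e1 by (metis ln_le_cancel_iff order_less_le_trans)
      moreover have "ln (real (covering_number \<delta> G)) \<le> ln Bc - 2 * ln \<delta>"
        using N(2) Nl Al e2 by (metis ln_le_cancel_iff order_less_le_trans)
      ultimately show ?thesis unfolding g_def using lnp
        by (metis divide_right_mono less_imp_le)
    qed
    show "\<forall>\<^sub>F \<delta> in at_right 0. (ln (A/4) - 2 * ln \<delta>) / - ln \<delta> \<le> g \<delta>"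
      using ev by eventually_elim (use both in blast)
    show "\<forall>\<^sub>F \<delta> in at_right 0. g \<delta> \<le> (ln Bc - 2 * ln \<delta>) / - ln \<delta>"
      using ev by eventually_elim (use both in blast)
  qed
  have l1: "((\<lambda>\<delta>. (ln (A/4) - 2 * ln \<delta>) / - ln \<delta>) \<longlongrightarrow> 2) (at_right 0)" by real_asymp
  have l2: "((\<lambda>\<delta>. (ln Bc - 2 * ln \<delta>) / - ln \<delta>) \<longlongrightarrow> 2) (at_right 0)" by real_asymp
  have gl: "(g \<longlongrightarrow> 2) (at_right 0)" by (rule real_tendsto_sandwich[OF lowg upg l1 l2])
  then have egl: "((\<lambda>\<delta>. ereal (g \<delta>)) \<longlongrightarrow> ereal 2) (at_right 0)" by (rule tendsto_ereal)
  have box: "has_box_dim G 2"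
    unfolding has_box_dim_def lower_box_dim_def upper_box_dim_def
    using lim_imp_Liminf[OF _ egl] lim_imp_Limsup[OF _ egl] unfolding g_def by simp
  have H1: "hausdorff_measure s G = 0" if s2: "s > 2" for s
  proof -
    have "hausdorff_content s \<delta>0 G = 0" if d0: "\<delta>0 > 0" for \<delta>0
    proof -
      have "hausdorff_content s \<delta>0 G \<le> 0"
      proof (rule ennreal_le_epsilon)
        fix \<epsilon> :: real assume ep: "0 < \<epsilon>"
        have tl: "((\<lambda>x::real. Bc * x powr (s-2)) \<longlongrightarrow> 0) (at_right 0)" using s2 by real_asymp
        have e1: "\<forall>\<^sub>F \<delta> in at_right 0. Bc * \<delta> powr (s-2) < \<epsilon>" by (rule order_tendstoD(2)[OF tl ep])
        have e2: "\<forall>\<^sub>F \<delta> in at_right 0. \<delta> \<in> {0<..<min \<delta>0 L0}" using d0 L0p by (intro eventually_at_right_real) simp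
        have nb: "at_right (0::real) \<noteq> bot" by simp
        obtain \<delta> where "Bc * \<delta> powr (s-2) < \<epsilon> \<and> \<delta> \<in> {0<..<min \<delta>0 L0}"
          using eventually_happens'[OF nb eventually_conj[OF e1 e2]] by blast
        then have dd: "Bc * \<delta> powr (s-2) < \<epsilon>" "0 < \<delta>" "\<delta> < \<delta>0" "\<delta> < L0" by auto
        obtain C where C: "finite C" "G \<subseteq> \<Union>C" "\<forall>U\<in>C. bounded U \<and> diameter U \<le> \<delta>" "real (card C) \<le> Bc / \<delta>^2"
          using upper[OF dd(2)] dd(4) by auto
        obtain U where U: "(\<Union>i. U i) = \<Union>C" "\<forall>i. U i \<in> C \<or> U i = {}"
          "\<And>h::_ set \<Rightarrow> real. h {} = 0 \<Longrightarrow> (\<forall>V. 0 \<le> h V) \<Longrightarrow> (\<Sum>i. ennreal (h (U i))) = ennreal (\<Sum>V\<in>C. h V)"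
          using finite_seq[OF C(1)] by blast
        have "\<forall>i. bounded (U i) \<and> diameter (U i) \<le> \<delta>0"
        proof
          fix i
          show "bounded (U i) \<and> diameter (U i) \<le> \<delta>0"
          proof (cases "U i = {}")
            case True then show ?thesis using d0 by simp
          next
            case False
            then have "U i \<in> C" using U(2) by blast
            then show ?thesis using C(3) dd(3) by fastforce
          qed
        qed
        moreover have "G \<subseteq> (\<Union>i. U i)" using U(1) C(2) by simp
        ultimately have Uok: "G \<subseteq> (\<Union>i. U i) \<and> (\<forall>i. bounded (U i) \<and> diameter (U i) \<le> \<delta>0)" by simp
        have re: "(\<Sum>V\<in>C. \<delta> powr s) \<le> \<epsilon>"
        proof -
          have "(\<Sum>V\<in>C. \<delta> powr s) = real (card C) * \<delta> powr s" by simp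
          also have "\<dots> \<le> Bc / \<delta>^2 * \<delta> powr s" using C(4) by (intro mult_right_mono) auto
          also have "\<dots> = Bc * \<delta> powr (s-2)"
          proof -
            have "\<delta> powr (s-2) = \<delta> powr s / \<delta> powr 2" by (rule powr_diff)
            also have "\<delta> powr 2 = \<delta>^2" using dd(2) by simp
            finally show ?thesis by simp
          qed
          also have "\<dots> \<le> \<epsilon>" using dd(1) by simp
          finally show ?thesis .
        qed
        have "hausdorff_content s \<delta>0 G \<le> (\<Sum>i. ennreal (diameter (U i) powr s))"
          unfolding hausdorff_content_def using Uok by (intro INF_lower) simp
        also have "\<dots> = ennreal (\<Sum>V\<in>C. diameter V powr s)" by (rule U(3)) auto
        also have "\<dots> \<le> ennreal (\<Sum>V\<in>C. \<delta> powr s)"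
        proof (intro ennreal_leI sum_mono)
          fix V assume "V \<in> C"
          then show "diameter V powr s \<le> \<delta> powr s" using C(3) s2
            by (intro powr_mono2) (auto simp: diameter_ge_0)
        qed
        also have "\<dots> \<le> ennreal \<epsilon>" using re by (rule ennreal_leI)
        finally show "hausdorff_content s \<delta>0 G \<le> 0 + ennreal \<epsilon>" by simp
      qed
      then show ?thesis by simp
    qed
    then show ?thesis unfolding hausdorff_measure_def by simp
  qed
  have H2: "hausdorff_measure s G \<noteq> 0" if s0: "0 \<le> s" and s2: "s < 2" for s
  proof -
    have "ennreal (A/4) \<le> hausdorff_content s 1 G"
      unfolding hausdorff_content_def
    proof (intro INF_greatest)
      fix U :: "nat \<Rightarrow> (real \<times> real \<times> real) set"
      assume "U \<in> {U. G \<subseteq> (\<Union>i. U i) \<and> (\<forall>i. bounded (U i) \<and> diameter (U i) \<le> 1)}"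
      then have cov: "G \<subseteq> (\<Union>i. U i)" and bU: "\<forall>i. bounded (U i)" and dU: "\<forall>i. diameter (U i) \<le> 1" by auto
      have "4 * ennreal (A/4) = ennreal A"
      proof -
        have "ennreal 4 * ennreal (A/4) = ennreal (4 * (A/4))" using Ap by (intro ennreal_mult[symmetric]) auto
        then show ?thesis by simp
      qed
      also have "ennreal A \<le> (\<Sum>i. ennreal (4 * diameter (U i)^2))"
        using area_lemma[OF less_imp_le[OF ab] less_imp_le[OF cd] _ bU] cov unfolding A_def G_def by blast
      also have "\<dots> = (\<Sum>i. 4 * ennreal (diameter (U i)^2))" by (simp add: ennreal_mult)
      also have "\<dots> = 4 * (\<Sum>i. ennreal (diameter (U i)^2))" by simp
      also have "\<dots> \<le> 4 * (\<Sum>i. ennreal (diameter (U i) powr s))"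
      proof (intro mult_left_mono suminf_le ennreal_leI)
        fix i
        have D: "0 \<le> diameter (U i)" "diameter (U i) \<le> 1" using dU bU by (auto simp: diameter_ge_0)
        show "diameter (U i)^2 \<le> diameter (U i) powr s"
        proof (cases "diameter (U i) = 0")
          case True then show ?thesis by simp
        next
          case False
          then have "0 < diameter (U i)" using D by simp
          then have "diameter (U i)^2 = diameter (U i) powr 2" by simp
          also have "\<dots> \<le> diameter (U i) powr s" using D s2 by (intro powr_mono') auto
          finally show ?thesis .
        qed
      qed auto
      finally show "ennreal (A/4) \<le> (\<Sum>i. ennreal (diameter (U i) powr s))"
        by (subst (asm) ennreal_mult_le_mult_iff) auto
    qed
    also have "\<dots> \<le> hausdorff_measure s G" unfolding hausdorff_measure_def
      by (rule SUP_upper) simp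
    finally show ?thesis using Ap by (auto simp: ennreal_eq_0_iff)
  qed
  define HS where "HS = {s. 0 \<le> s \<and> hausdorff_measure s G = 0}"
  have HSge: "s \<in> HS \<Longrightarrow> 2 \<le> s" for s unfolding HS_def using H2 by force
  have HSin: "s > 2 \<Longrightarrow> s \<in> HS" for s unfolding HS_def using H1 by auto
  have bd: "bdd_below HS" using HSge by (intro bdd_belowI[of _ 2]) auto
  have "2 \<le> Inf HS" using HSin[of 3] HSge by (intro cInf_greatest) auto
  moreover have "Inf HS \<le> 2"
  proof (rule field_le_epsilon)
    fix e :: real assume "0 < e"
    then show "Inf HS \<le> 2 + e" using HSin[of "2+e"] bd by (intro cInf_lower) auto
  qed
  ultimately have "hausdorff_dim G = 2" unfolding hausdorff_dim_def HS_def by simp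
  then show ?thesis using box unfolding G_def by simp
qed

end
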